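(* Let $r_0,r_1,r_2\ge 1$ and $L=\mathfrak{g}(r_0,r_1,r_2)$. Then $$b(L)=\begin{cases} r_1(r_0+r_2-r_1) & \text{if } r_1<r_0 \text{ and } r_1<r_2,\\ r_0r_2 & \text{if } r_1\ge r_0 \text{ or } r_1\ge r_2.\end{cases}$$
   Context: All Lie algebras are over an algebraically closed field $\mathbf{k}$ of characteristic zero. $\mathcal{P}(r_0,r_1,r_2)$ is the poset on $\{b_1,\dots,b_{r_0},m_1,\dots,m_{r_1},t_1,\dots,t_{r_2}\}$ whose strict relations are exactly $b_i\prec m_j$, $m_j\prec t_k$ and $b_i\prec t_k$ for all $i,j,k$. $\mathfrak{g}(r_0,r_1,r_2)$ denotes the nilpotent Lie poset algebra $\mathfrak{g}^{\prec}(\mathcal{P}(r_0,r_1,r_2))$: the Lie algebra under the commutator bracket spanned by matrix units $E_{p,q}$ with $p\prec q$. The breadth of a Lie algebra $L$ is $b(L)=\max_{x\in L}\operatorname{rank}(\mathrm{ad}_x)$, where $\mathrm{ad}_x=[x,-]$. *)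

theory Defs
  imports "HOL-Library.Function_Algebras" "HOL-Computational_Algebra.Polynomial"
begin

definition alg_closed :: "'k::field itself \<Rightarrow> bool" where
  "alg_closed _ \<longleftrightarrow> (\<forall>p :: 'k poly. degree p > 0 \<longrightarrow> (\<exists>x. poly p x = 0))"

type_synonym ('a, 'k) pmat = "'a \<Rightarrow> 'a \<Rightarrow> 'k"

definition mscale :: "'k::field \<Rightarrow> ('a, 'k) pmat \<Rightarrow> ('a, 'k) pmat" where
  "mscale c A = (\<lambda>p q. c * A p q)"

definition munit :: "'a \<Rightarrow> 'a \<Rightarrow> ('a, 'k::field) pmat" where
  "munit p q = (\<lambda>i j. if i = p \<and> j = q then 1 else 0)"

definition mmult :: "'a set \<Rightarrow> ('a, 'k::field) pmat \<Rightarrow> ('a, 'k) pmat \<Rightarrow> ('a, 'k) pmat" where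
  "mmult P A B = (\<lambda>p q. \<Sum>r\<in>P. A p r * B r q)"

definition commutator :: "'a set \<Rightarrow> ('a, 'k::field) pmat \<Rightarrow> ('a, 'k) pmat \<Rightarrow> ('a, 'k) pmat" where
  "commutator P A B = mmult P A B - mmult P B A"

definition lie_poset_alg :: "'a set \<Rightarrow> ('a \<Rightarrow> 'a \<Rightarrow> bool) \<Rightarrow> ('a, 'k::field) pmat set" where
  "lie_poset_alg P prec =
     module.span (mscale :: 'k \<Rightarrow> _) {munit p q | p q. p \<in> P \<and> q \<in> P \<and> prec p q}"

definition ad_rank :: "'a set \<Rightarrow> ('a, 'k::field) pmat set \<Rightarrow> ('a, 'k) pmat \<Rightarrow> nat" where
  "ad_rank P L x = vector_space.dim (mscale :: 'k \<Rightarrow> _) ((\<lambda>y. commutator P x y) ` L)"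

definition breadth :: "'a set \<Rightarrow> ('a, 'k::field) pmat set \<Rightarrow> nat" where
  "breadth P L = Max {ad_rank P L x | x. x \<in> L}"

text \<open>The poset P(r0,r1,r2): elements (0,i) = b_{i+1} (i<r0), (1,j) = m_{j+1} (j<r1),
  (2,k) = t_{k+1} (k<r2); strict order: (l,i) \<prec> (l',j) iff l < l'.\<close>
definition P3 :: "nat \<Rightarrow> nat \<Rightarrow> nat \<Rightarrow> (nat \<times> nat) set" where
  "P3 r0 r1 r2 = {(0, i) | i. i < r0} \<union> {(1, j) | j. j < r1} \<union> {(2, k) | k. k < r2}"

definition prec3 :: "nat \<times> nat \<Rightarrow> nat \<times> nat \<Rightarrow> bool" where
  "prec3 a b \<longleftrightarrow> fst a < fst b"

definition g3 :: "nat \<Rightarrow> nat \<Rightarrow> nat \<Rightarrow> (nat \<times> nat, 'k::field) pmat set" where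
  "g3 r0 r1 r2 = lie_poset_alg (P3 r0 r1 r2) prec3"

end

theory Submission imports Defs begin

lemma vs_mscale: "vector_space (mscale :: 'k::field \<Rightarrow> ('a,'k) pmat \<Rightarrow> _)"
  by unfold_locales (auto simp: mscale_def fun_eq_iff algebra_simps)

interpretation ms: vector_space "mscale :: 'k::field \<Rightarrow> ('a,'k) pmat \<Rightarrow> _"
  by (rule vs_mscale)

lemma sum_fun_app: "(sum f A) x = (\<Sum>a\<in>A. f a x)"
  by (induction A rule: infinite_finite_induct) auto

lemma sum_fun_app2: "(sum f A) x y = (\<Sum>a\<in>A. f a x y)"
  by (simp add: sum_fun_app)

lemma mscale_app[simp]: "mscale c A p q = c * A p q" by (simp add: mscale_def)

lemma munit_app: "munit a b p q = (if p = a \<and> q = b then 1 else 0)" by (simp add: munit_def)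

definition inL :: "nat \<Rightarrow> nat \<Rightarrow> nat \<Rightarrow> (nat \<times> nat, 'k::field) pmat \<Rightarrow> bool" where
  "inL r0 r1 r2 y \<longleftrightarrow> (\<forall>p q. y p q \<noteq> 0 \<longrightarrow> p \<in> P3 r0 r1 r2 \<and> q \<in> P3 r0 r1 r2 \<and> prec3 p q)"

lemma finite_P3: "finite (P3 r0 r1 r2)"
proof -
  have "P3 r0 r1 r2 \<subseteq> {0..2} \<times> {..<max r0 (max r1 r2)}" by (auto simp: P3_def)
  thus ?thesis by (rule finite_subset) auto
qed

lemma g3_char: "g3 r0 r1 r2 = {y :: (nat \<times> nat, 'k::field) pmat. inL r0 r1 r2 y}"
proof
  let ?G = "{munit p q | p q. p \<in> P3 r0 r1 r2 \<and> q \<in> P3 r0 r1 r2 \<and> prec3 p q} :: (nat \<times> nat, 'k) pmat set"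
  have sub: "ms.subspace {y :: (nat \<times> nat, 'k) pmat. inL r0 r1 r2 y}"
  proof -
    have "x + y \<in> {y. inL r0 r1 r2 y}" if "x \<in> {y. inL r0 r1 r2 y}" "y \<in> {y. inL r0 r1 r2 y}" for x y :: "(nat \<times> nat, 'k) pmat"
    proof -
      have "(x + y) p q \<noteq> 0 \<Longrightarrow> x p q \<noteq> 0 \<or> y p q \<noteq> 0" for p q by auto
      thus ?thesis using that unfolding inL_def by blast
    qed
    moreover have "mscale c x \<in> {y. inL r0 r1 r2 y}" if "x \<in> {y. inL r0 r1 r2 y}" for c :: 'k and x :: "(nat \<times> nat, 'k) pmat"
      using that unfolding inL_def by auto
    moreover have "(0 :: (nat \<times> nat, 'k) pmat) \<in> {y. inL r0 r1 r2 y}" by (simp add: inL_def)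
    ultimately show ?thesis unfolding ms.subspace_def by blast
  qed
  show "g3 r0 r1 r2 \<subseteq> {y :: (nat \<times> nat, 'k) pmat. inL r0 r1 r2 y}"
    unfolding g3_def lie_poset_alg_def
    by (rule ms.span_minimal[OF _ sub]) (auto simp: inL_def munit_app split: if_splits)
  show "{y. inL r0 r1 r2 y} \<subseteq> (g3 r0 r1 r2 :: (nat \<times> nat, 'k) pmat set)"
  proof
    fix y :: "(nat \<times> nat, 'k) pmat" assume "y \<in> {y. inL r0 r1 r2 y}"
    hence y: "inL r0 r1 r2 y" by simp
    let ?Z = "{z \<in> P3 r0 r1 r2 \<times> P3 r0 r1 r2. prec3 (fst z) (snd z)}"
    have fin: "finite ?Z" using finite_P3 by auto
    have eq: "y = (\<Sum>z\<in>?Z. mscale (y (fst z) (snd z)) (munit (fst z) (snd z)))"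
    proof (intro ext)
      fix p q
      have yz: "y p q \<noteq> 0 \<Longrightarrow> p \<in> P3 r0 r1 r2 \<and> q \<in> P3 r0 r1 r2 \<and> prec3 p q"
        using y unfolding inL_def by blast
      have "(\<Sum>z\<in>?Z. mscale (y (fst z) (snd z)) (munit (fst z) (snd z))) p q
          = (\<Sum>z\<in>?Z. if z = (p,q) then y p q else 0)"
        by (simp add: sum_fun_app2 munit_app) (rule sum.cong, auto)
      also have "\<dots> = y p q" using yz
        by (cases "(p,q) \<in> ?Z") (auto simp: sum.delta[OF fin])
      finally show "y p q = (\<Sum>z\<in>?Z. mscale (y (fst z) (snd z)) (munit (fst z) (snd z))) p q" ..
    qed
    have "(\<Sum>z\<in>?Z. mscale (y (fst z) (snd z)) (munit (fst z) (snd z))) \<in> ms.span ?G"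
    proof (intro ms.span_sum ms.span_scale ms.span_base)
      fix z assume "z \<in> ?Z"
      thus "munit (fst z) (snd z) \<in> ?G" by (cases z) auto
    qed
    thus "y \<in> g3 r0 r1 r2" unfolding g3_def lie_poset_alg_def using eq by simp
  qed
qed

lemma mem_P3: "(l, i) \<in> P3 r0 r1 r2 \<longleftrightarrow> (l = 0 \<and> i < r0) \<or> (l = 1 \<and> i < r1) \<or> (l = 2 \<and> i < r2)"
  by (auto simp: P3_def)

lemma mem_P3': "z \<in> P3 r0 r1 r2 \<longleftrightarrow> (fst z = 0 \<and> snd z < r0) \<or> (fst z = 1 \<and> snd z < r1) \<or> (fst z = 2 \<and> snd z < r2)"
  by (cases z) (auto simp: P3_def)

lemma comm_lin: "module_hom mscale mscale (commutator P (x :: ('a, 'k::field) pmat))"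
  unfolding module_hom_iff
proof (intro conjI allI)
  show "module (mscale :: 'k \<Rightarrow> ('a, 'k) pmat \<Rightarrow> _)" by (rule ms.module_axioms)
  show "module (mscale :: 'k \<Rightarrow> ('a, 'k) pmat \<Rightarrow> _)" by (rule ms.module_axioms)
  fix y z :: "('a, 'k) pmat"
  show "commutator P x (y + z) = commutator P x y + commutator P x z"
    by (simp add: commutator_def mmult_def fun_eq_iff algebra_simps sum.distrib)
  fix c :: 'k
  show "commutator P x (mscale c y) = mscale c (commutator P x y)"
    by (simp add: commutator_def mmult_def fun_eq_iff algebra_simps sum_distrib_left right_diff_distrib)
qed

lemma comm_munit: "finite P \<Longrightarrow> commutator P x (munit p q) =
   (\<lambda>a b. (if p \<in> P \<and> b = q then x a p else 0) - (if a = p \<and> q \<in> P then x q b else 0))"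
proof (intro ext)
  fix a b assume fP: "finite P"
  have 1: "(\<Sum>r\<in>P. x a r * munit p q r b) = (if p \<in> P \<and> b = q then x a p else 0)"
  proof -
    have "(\<Sum>r\<in>P. x a r * munit p q r b) = (\<Sum>r\<in>P. if r = p then (if b = q then x a p else 0) else 0)"
      by (rule sum.cong) (auto simp: munit_app)
    also have "\<dots> = (if p \<in> P \<and> b = q then x a p else 0)"
      by (cases "p \<in> P") (auto simp: sum.delta[OF fP] split: if_splits)
    finally show ?thesis .
  qed
  have 2: "(\<Sum>r\<in>P. munit p q a r * x r b) = (if a = p \<and> q \<in> P then x q b else 0)"
  proof -
    have "(\<Sum>r\<in>P. munit p q a r * x r b) = (\<Sum>r\<in>P. if r = q then (if a = p then x q b else 0) else 0)"
      by (rule sum.cong) (auto simp: munit_app)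
    also have "\<dots> = (if a = p \<and> q \<in> P then x q b else 0)"
      by (cases "q \<in> P") (auto simp: sum.delta[OF fP] split: if_splits)
    finally show ?thesis .
  qed
  show "commutator P x (munit p q) a b = (if p \<in> P \<and> b = q then x a p else 0) - (if a = p \<and> q \<in> P then x q b else 0)"
    using 1 2 by (simp add: commutator_def mmult_def)
qed

lemma lin_span_into:
  assumes "module_hom (mscale :: 'k::field \<Rightarrow> ('a, 'k) pmat \<Rightarrow> _) mscale h"
    and "s \<in> ms.span B" and "\<And>b. b \<in> B \<Longrightarrow> h b \<in> ms.span G"
  shows "h s \<in> ms.span G"
proof -
  have "h ` ms.span B \<subseteq> ms.span (h ` B)"
    using module_hom.spans_image[OF assms(1), of "ms.span B" B] by simp
  also have "\<dots> \<subseteq> ms.span G"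
    using assms(3) by (metis image_subset_iff ms.span_minimal ms.subspace_span)
  finally show ?thesis using assms(2) by blast
qed

lemma card_le_dim:
  fixes S V W :: "('a, 'k::field) pmat set"
  assumes "S \<subseteq> V" "ms.independent S" "finite W" "V \<subseteq> ms.span W"
  shows "card S \<le> ms.dim V"
proof -
  obtain A where A: "A \<subseteq> V" "ms.independent A" "V \<subseteq> ms.span A" "card A = ms.dim V"
    using ms.basis_exists by blast
  have "finite A" using ms.independent_span_bound[OF assms(3) A(2)] A(1) assms(4) by blast
  hence "card S \<le> card A" using ms.independent_span_bound[OF _ assms(2)] A(3) assms(1) by blast
  thus ?thesis using A(4) by simp
qed

lemma munit_eq_iff: "(munit p q :: ('a, 'k::field) pmat) = munit p' q' \<longleftrightarrow> p = p' \<and> q = q'"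
proof
  assume "(munit p q :: ('a, 'k::field) pmat) = munit p' q'"
  hence "(munit p q :: ('a, 'k::field) pmat) p q = munit p' q' p q" by simp
  thus "p = p' \<and> q = q'" by (auto simp: munit_app split: if_splits)
qed simp

lemma munit_indep:
  assumes "finite Z"
  shows "ms.independent ((\<lambda>z. munit (fst z) (snd z) :: ('a, 'k::field) pmat) ` Z)"
proof (rule ms.independent_if_scalars_zero)
  show "finite ((\<lambda>z. munit (fst z) (snd z) :: ('a, 'k::field) pmat) ` Z)" using assms by simp
  fix f :: "('a, 'k) pmat \<Rightarrow> 'k" and y
  assume s: "(\<Sum>x\<in>(\<lambda>z. munit (fst z) (snd z)) ` Z. mscale (f x) x) = 0"
     and y: "y \<in> (\<lambda>z. munit (fst z) (snd z) :: ('a, 'k::field) pmat) ` Z"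
  then obtain p q where pq: "(p,q) \<in> Z" "y = munit p q" by auto
  let ?A = "(\<lambda>z. munit (fst z) (snd z) :: ('a, 'k::field) pmat) ` Z"
  have fin: "finite ?A" using assms by simp
  have "0 = (\<Sum>x\<in>?A. mscale (f x) x) p q" using s by simp
  also have "\<dots> = (\<Sum>x\<in>?A. f x * x p q)" by (simp add: sum_fun_app2)
  also have "\<dots> = (\<Sum>x\<in>?A. if x = y then f y else 0)"
  proof (rule sum.cong)
    fix x assume "x \<in> ?A"
    then obtain p' q' where "x = munit p' q'" by auto
    thus "f x * x p q = (if x = y then f y else 0)" using pq(2) by (auto simp: munit_app munit_eq_iff)
  qed simp
  also have "\<dots> = f y" using y fin by (simp add: sum.delta')
  finally show "f y = 0" by simp
qed

definition colv :: "(nat \<times> nat, 'k::field) pmat \<Rightarrow> nat \<Rightarrow> (nat \<times> nat, 'k) pmat" where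
  "colv x j = (\<lambda>a b. if b = (2,0) then x a (1,j) else 0)"
definition shiftc :: "nat \<Rightarrow> (nat \<times> nat, 'k::field) pmat \<Rightarrow> (nat \<times> nat, 'k) pmat" where
  "shiftc k M = (\<lambda>a b. if b = (2,k) then M a (2,0) else 0)"
definition rowv :: "(nat \<times> nat, 'k::field) pmat \<Rightarrow> nat \<Rightarrow> (nat \<times> nat, 'k) pmat" where
  "rowv x j = (\<lambda>a b. if a = (0,0) then x (1,j) b else 0)"
definition shiftr :: "nat \<Rightarrow> (nat \<times> nat, 'k::field) pmat \<Rightarrow> (nat \<times> nat, 'k) pmat" where
  "shiftr i M = (\<lambda>a b. if a = (0,i) then M (0,0) b else 0)"
definition tens :: "(nat \<times> nat, 'k::field) pmat \<Rightarrow> (nat \<times> nat, 'k) pmat \<Rightarrow> (nat \<times> nat, 'k) pmat" where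
  "tens M N = (\<lambda>a b. M a (2,0) * N (0,0) b)"
definition eunit :: "nat \<Rightarrow> (nat \<times> nat, 'k::field) pmat" where
  "eunit i = munit (0,i) (2,0)"

lemma sum_if_eq: "finite A \<Longrightarrow> (\<Sum>a\<in>A. (f a :: 'k::field) * (if k = a then c else 0)) = (if k \<in> A then f k * c else 0)"
proof -
  assume fA: "finite A"
  have "(\<Sum>a\<in>A. f a * (if k = a then c else 0)) = (\<Sum>a\<in>A. if k = a then f k * c else 0)"
    by (rule sum.cong) auto
  thus ?thesis using fA by (simp add: sum.delta)
qed

lemma hom_intro:
  assumes "\<And>y z. h (y + z) = h y + h z" "\<And>c y. h (mscale c y) = mscale c (h y)"
  shows "module_hom (mscale :: 'k::field \<Rightarrow> ('a, 'k) pmat \<Rightarrow> _) (mscale :: 'k \<Rightarrow> ('a, 'k) pmat \<Rightarrow> _) h"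
  unfolding module_hom_iff using assms ms.module_axioms by blast

lemma shiftc_lin: "module_hom mscale mscale (shiftc k :: (nat \<times> nat, 'k::field) pmat \<Rightarrow> _)"
  by (rule hom_intro) (auto simp: shiftc_def fun_eq_iff)
lemma shiftr_lin: "module_hom mscale mscale (shiftr k :: (nat \<times> nat, 'k::field) pmat \<Rightarrow> _)"
  by (rule hom_intro) (auto simp: shiftr_def fun_eq_iff)
lemma tens_lin1: "module_hom mscale mscale (\<lambda>M. tens M N :: (nat \<times> nat, 'k::field) pmat)"
  by (rule hom_intro) (auto simp: tens_def fun_eq_iff algebra_simps)
lemma tens_lin2: "module_hom mscale mscale (\<lambda>N. tens M N :: (nat \<times> nat, 'k::field) pmat)"
  by (rule hom_intro) (auto simp: tens_def fun_eq_iff algebra_simps)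

context
  fixes r0 r1 r2 :: nat and x :: "(nat \<times> nat, 'k::field) pmat"
  assumes xL: "inL r0 r1 r2 x"
begin

lemma xnz: "x p q \<noteq> 0 \<Longrightarrow> p \<in> P3 r0 r1 r2 \<and> q \<in> P3 r0 r1 r2 \<and> prec3 p q"
  using xL unfolding inL_def by blast

lemma inL_0: "x a (0,i) = 0"
  using xnz[of a "(0,i)"] by (auto simp: prec3_def)

lemma inL_2: "x (2,k) b = 0"
proof (rule ccontr)
  assume "x (2,k) b \<noteq> 0"
  from xnz[OF this] show False by (cases b) (auto simp: prec3_def mem_P3)
qed

lemma inL_col: "x a (1,j) \<noteq> 0 \<Longrightarrow> fst a = 0 \<and> snd a < r0"
  using xnz[of a "(1,j)"] by (auto simp: prec3_def mem_P3')

lemma inL_row: "x (1,l) b \<noteq> 0 \<Longrightarrow> fst b = 2 \<and> snd b < r2"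
  using xnz[of "(1,l)" b] by (auto simp: prec3_def mem_P3')

lemma img12: "j < r1 \<Longrightarrow> k < r2 \<Longrightarrow> commutator (P3 r0 r1 r2) x (munit (1,j) (2,k)) = shiftc k (colv x j)"
  by (simp add: comm_munit finite_P3 mem_P3 inL_2 shiftc_def colv_def fun_eq_iff)

lemma img01: "i < r0 \<Longrightarrow> j < r1 \<Longrightarrow> commutator (P3 r0 r1 r2) x (munit (0,i) (1,j)) = - shiftr i (rowv x j)"
  by (simp add: comm_munit finite_P3 mem_P3 inL_0 shiftr_def rowv_def fun_eq_iff)

lemma img02: "commutator (P3 r0 r1 r2) x (munit (0,i) (2,k)) = 0"
  by (simp add: comm_munit finite_P3 mem_P3 inL_0 inL_2 fun_eq_iff)

lemma colv_span: "colv x j \<in> ms.span (eunit ` {..<r0})"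
proof -
  have "colv x j = (\<Sum>i<r0. mscale (x (0,i) (1,j)) (eunit i))"
  proof (intro ext)
    fix a b
    show "colv x j a b = (\<Sum>i<r0. mscale (x (0,i) (1,j)) (eunit i)) a b"
    proof (cases "b = (2,0) \<and> fst a = 0 \<and> snd a < r0")
      case True
      then obtain i where a: "a = (0,i)" "i < r0" by (cases a) auto
      have "(\<Sum>i'<r0. mscale (x (0,i') (1,j)) (eunit i')) a b = x (0,i) (1,j)"
        using a True by (simp add: sum_fun_app2 eunit_def munit_app sum_if_eq)
      thus ?thesis using True a by (simp add: colv_def)
    next
      case False
      have "(\<Sum>i'<r0. mscale (x (0,i') (1,j)) (eunit i')) a b = 0"
        using False by (simp add: sum_fun_app2 eunit_def munit_app) (rule sum.neutral, auto)
      moreover have "colv x j a b = 0" using False inL_col[of a j] unfolding colv_def by (cases "x a (1,j) = 0") auto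
      ultimately show ?thesis by simp
    qed
  qed
  also have "\<dots> \<in> ms.span (eunit ` {..<r0})"
    by (intro ms.span_sum ms.span_scale ms.span_base) auto
  finally show ?thesis .
qed

lemma rowv_span: "rowv x l \<in> ms.span ((\<lambda>k. munit (0,0) (2,k)) ` {..<r2})"
proof -
  have "rowv x l = (\<Sum>k<r2. mscale (x (1,l) (2,k)) (munit (0,0) (2,k)))"
  proof (intro ext)
    fix a b
    show "rowv x l a b = (\<Sum>k<r2. mscale (x (1,l) (2,k)) (munit (0,0) (2,k))) a b"
    proof (cases "a = (0,0) \<and> fst b = 2 \<and> snd b < r2")
      case True
      then obtain k where b: "b = (2,k)" "k < r2" by (cases b) auto
      have "(\<Sum>k'<r2. mscale (x (1,l) (2,k')) (munit (0,0) (2,k'))) a b = x (1,l) (2,k)"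
        using b True by (simp add: sum_fun_app2 munit_app sum_if_eq)
      thus ?thesis using True b by (simp add: rowv_def)
    next
      case False
      have "(\<Sum>k'<r2. mscale (x (1,l) (2,k')) (munit (0,0) (2,k'))) a b = 0"
        using False by (simp add: sum_fun_app2 munit_app) (rule sum.neutral, auto)
      moreover have "rowv x l a b = 0" using False inL_row[of l b] unfolding rowv_def by (cases "x (1,l) b = 0") auto
      ultimately show ?thesis by simp
    qed
  qed
  also have "\<dots> \<in> ms.span ((\<lambda>k. munit (0,0) (2,k)) ` {..<r2})"
    by (intro ms.span_sum ms.span_scale ms.span_base) auto
  finally show ?thesis .
qed

lemma tens_cr: "tens (colv x j) (rowv x l) = (\<Sum>k<r2. mscale (x (1,l) (2,k)) (shiftc k (colv x j)))"
proof (intro ext)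
  fix a b
  show "tens (colv x j) (rowv x l) a b = (\<Sum>k<r2. mscale (x (1,l) (2,k)) (shiftc k (colv x j))) a b"
  proof (cases "fst b = 2 \<and> snd b < r2")
    case True
    then obtain k where b: "b = (2,k)" "k < r2" by (cases b) auto
    have "(\<Sum>k'<r2. mscale (x (1,l) (2,k')) (shiftc k' (colv x j))) a b = x (1,l) (2,k) * x a (1,j)"
      using b by (simp add: sum_fun_app2 shiftc_def colv_def sum_if_eq)
    thus ?thesis using b by (simp add: tens_def colv_def rowv_def mult.commute)
  next
    case False
    have "(\<Sum>k'<r2. mscale (x (1,l) (2,k')) (shiftc k' (colv x j))) a b = 0"
      using False by (simp add: sum_fun_app2 shiftc_def) (rule sum.neutral, auto)
    moreover have "tens (colv x j) (rowv x l) a b = 0" using False inL_row[of l b] unfolding tens_def rowv_def by (cases "x (1,l) b = 0") auto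
    ultimately show ?thesis by simp
  qed
qed

end

lemma arith_ub:
  fixes a f c r0 r1 r2 :: nat
  assumes "a \<le> r0" "a \<le> r1" "f \<le> r0 - a" "c \<le> r1" "c \<le> r2"
  shows "a * r2 + f * c \<le> (if r1 < r0 \<and> r1 < r2 then r1 * (r0 + r2 - r1) else r0 * r2)"
proof -
  have 1: "f * c \<le> (r0 - a) * c" using assms(3) by (rule mult_le_mono1)
  show ?thesis
  proof (cases "r1 < r0 \<and> r1 < r2")
    case True
    have 2: "(r0 - a) * c \<le> (r0 - a) * r1" using assms(4) by (rule mult_le_mono2)
    obtain t where t: "r1 = a + t" using assms(2) le_Suc_ex by blast
    obtain u where u: "r0 = r1 + u" using True less_imp_le_nat le_Suc_ex by blast
    obtain v where v: "r2 = r1 + v" using True less_imp_le_nat le_Suc_ex by blast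
    have 3: "a * r2 + (r0 - a) * r1 \<le> r1 * (r0 + r2 - r1)"
      unfolding u v t by (simp add: algebra_simps)
    have "a * r2 + f * c \<le> r1 * (r0 + r2 - r1)" using 1 2 3 by linarith
    thus ?thesis using True by simp
  next
    case False
    have 2: "(r0 - a) * c \<le> (r0 - a) * r2" using assms(5) by (rule mult_le_mono2)
    have "a * r2 + (r0 - a) * r2 = r0 * r2" using assms(1)
      by (metis add_mult_distrib le_add_diff_inverse)
    hence "a * r2 + f * c \<le> r0 * r2" using 1 2 by linarith
    thus ?thesis using False by auto
  qed
qed

lemma arith_lb:
  fixes r0 r1 r2 :: nat
  shows "min r0 r1 * r2 + (r0 - min r0 r1) * min r1 r2 = (if r1 < r0 \<and> r1 < r2 then r1 * (r0 + r2 - r1) else r0 * r2)"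
proof (cases "r1 < r0")
  case True
  obtain u where u: "r0 = r1 + u" using True less_imp_le_nat le_Suc_ex by blast
  show ?thesis
  proof (cases "r1 < r2")
    case True
    obtain v where v: "r2 = r1 + v" using True less_imp_le_nat le_Suc_ex by blast
    show ?thesis unfolding u v by (simp add: algebra_simps)
  next
    case False
    thus ?thesis unfolding u by (simp add: algebra_simps min_def)
  qed
qed (simp add: min_def)

definition Gen :: "nat \<Rightarrow> nat \<Rightarrow> nat \<Rightarrow> (nat \<times> nat, 'k::field) pmat set" where
  "Gen r0 r1 r2 = {munit p q | p q. p \<in> P3 r0 r1 r2 \<and> q \<in> P3 r0 r1 r2 \<and> prec3 p q}"

lemma img_span: "(\<lambda>y. commutator (P3 r0 r1 r2) x y) ` (g3 r0 r1 r2 :: (nat \<times> nat, 'k::field) pmat set)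
   = ms.span ((\<lambda>y. commutator (P3 r0 r1 r2) x y) ` Gen r0 r1 r2)"
  using module_hom.span_image[OF comm_lin[of "P3 r0 r1 r2" x], of "Gen r0 r1 r2"]
  by (simp add: g3_def lie_poset_alg_def Gen_def)

lemma Gen_cases:
  assumes "g \<in> Gen r0 r1 r2"
  shows "(\<exists>j k. g = munit (1,j) (2,k) \<and> j < r1 \<and> k < r2) \<or> (\<exists>i j. g = munit (0,i) (1,j) \<and> i < r0 \<and> j < r1)
     \<or> (\<exists>i k. g = munit (0,i) (2,k) \<and> i < r0 \<and> k < r2)"
proof -
  obtain p q where g: "g = munit p q" "p \<in> P3 r0 r1 r2" "q \<in> P3 r0 r1 r2" "prec3 p q"
    using assms by (auto simp: Gen_def)
  obtain l1 i where p: "p = (l1, i)" by (cases p)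
  obtain l2 k where q: "q = (l2, k)" by (cases q)
  show ?thesis using g unfolding p q by (auto simp: mem_P3 prec3_def)
qed

lemma ub:
  fixes x :: "(nat \<times> nat, 'k::field) pmat"
  assumes xL: "inL r0 r1 r2 x"
  shows "ms.dim ((\<lambda>y. commutator (P3 r0 r1 r2) x y) ` g3 r0 r1 r2)
     \<le> (if r1 < r0 \<and> r1 < r2 then r1 * (r0 + r2 - r1) else r0 * r2)"
proof -
  define f where "f = (\<lambda>y. commutator (P3 r0 r1 r2) x y)"
  define C where "C = colv x ` {..<r1}"
  define E where "E = (eunit ` {..<r0} :: (nat \<times> nat, 'k) pmat set)"
  define D where "D = rowv x ` {..<r1}"
  define Er where "Er = ((\<lambda>k. munit (0,0) (2,k)) ` {..<r2} :: (nat \<times> nat, 'k) pmat set)"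
  obtain B1 where B1: "B1 \<subseteq> C" "ms.independent B1" "C \<subseteq> ms.span B1"
    using ms.maximal_independent_subset by blast
  obtain B2 where B2: "B1 \<subseteq> B2" "B2 \<subseteq> B1 \<union> E" "ms.independent B2" "B1 \<union> E \<subseteq> ms.span B2"
    using ms.maximal_independent_subset_extend[of B1 "B1 \<union> E"] B1(2) by blast
  obtain B3 where B3: "B3 \<subseteq> D" "ms.independent B3" "D \<subseteq> ms.span B3"
    using ms.maximal_independent_subset by blast
  have finE: "finite E" "card E \<le> r0" unfolding E_def using card_image_le[of "{..<r0}" eunit] by auto
  have finEr: "finite Er" "card Er \<le> r2" unfolding Er_def using card_image_le[of "{..<r2}"] by auto
  have finC: "finite C" "card C \<le> r1" unfolding C_def using card_image_le[of "{..<r1}" "colv x"] by auto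
  have finD: "finite D" "card D \<le> r1" unfolding D_def using card_image_le[of "{..<r1}" "rowv x"] by auto
  have CE: "C \<subseteq> ms.span E" unfolding C_def E_def using colv_span[OF xL] by auto
  have DEr: "D \<subseteq> ms.span Er" unfolding D_def Er_def using rowv_span[OF xL] by auto
  have "B2 \<subseteq> ms.span E" using B2(2) B1(1) CE ms.span_superset by blast
  hence cB2: "finite B2" "card B2 \<le> r0" using ms.independent_span_bound[OF finE(1) B2(3)] finE(2) by auto
  have cB1: "finite B1" "card B1 \<le> r1" using B1(1) finC card_mono[OF finC(1) B1(1)] finite_subset by auto
  have cB1': "card B1 \<le> card B2" using card_mono[OF cB2(1) B2(1)] .
  have "B3 \<subseteq> ms.span Er" using B3(1) DEr by blast
  hence cB3: "finite B3" "card B3 \<le> r2" using ms.independent_span_bound[OF finEr(1) B3(2)] finEr(2) by auto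
  have cB3': "card B3 \<le> r1" using card_mono[OF finD(1) B3(1)] finD(2) by simp
  define F where "F = B2 - B1"
  have cF: "card F = card B2 - card B1" unfolding F_def using card_Diff_subset[OF cB1(1) B2(1)] .
  have finF: "finite F" unfolding F_def using cB2(1) by simp
  have B2F: "B2 = B1 \<union> F" unfolding F_def using B2(1) by blast
  define G2 where "G2 = (\<lambda>(b,k). shiftc k b) ` (B1 \<times> {..<r2}) \<union> (\<lambda>(e,d). tens e d) ` (F \<times> B3)"
  have finG2: "finite G2" unfolding G2_def using cB1(1) finF cB3(1) by auto
  have cG2: "card G2 \<le> card B1 * r2 + card F * card B3"
  proof -
    have "card G2 \<le> card ((\<lambda>(b,k). shiftc k b) ` (B1 \<times> {..<r2})) + card ((\<lambda>(e,d). tens e d) ` (F \<times> B3))"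
      unfolding G2_def by (rule card_Un_le)
    also have "\<dots> \<le> card (B1 \<times> {..<r2}) + card (F \<times> B3)"
      by (intro add_mono card_image_le) (use cB1(1) finF cB3(1) in auto)
    also have "\<dots> = card B1 * r2 + card F * card B3" by (simp add: card_cartesian_product)
    finally show ?thesis .
  qed
  have sh: "shiftc k b \<in> ms.span G2" if "b \<in> B1" "k < r2" for b k
    by (rule ms.span_base) (use that in \<open>auto simp: G2_def\<close>)
  have key0: "tens e d \<in> ms.span G2" if eB2: "e \<in> B2" and dB3: "d \<in> B3" for e d
  proof (cases "e \<in> F")
    case True
    thus ?thesis using dB3 by (intro ms.span_base) (auto simp: G2_def)
  next
    case False
    hence eB1: "e \<in> B1" using eB2 B2F by auto
    then obtain j where j: "e = colv x j" using B1(1) by (auto simp: C_def)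
    obtain l where l: "d = rowv x l" using dB3 B3(1) by (auto simp: D_def)
    have "tens e d = (\<Sum>k<r2. mscale (x (1,l) (2,k)) (shiftc k (colv x j)))"
      unfolding j l by (rule tens_cr[OF xL])
    also have "\<dots> \<in> ms.span G2"
      by (intro ms.span_sum ms.span_scale sh) (use eB1 j in auto)
    finally show ?thesis .
  qed
  have key: "tens e d \<in> ms.span G2" if "e \<in> ms.span B2" "d \<in> ms.span B3" for e d
  proof -
    have "tens e d' \<in> ms.span G2" if "d' \<in> B3" for d'
      using lin_span_into[OF tens_lin1[of d'] \<open>e \<in> ms.span B2\<close>] key0 that by blast
    thus ?thesis using lin_span_into[OF tens_lin2[of e] \<open>d \<in> ms.span B3\<close>] by blast
  qed
  have imgs: "f g \<in> ms.span G2" if gG: "g \<in> Gen r0 r1 r2" for g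
  proof -
    consider (a) j k where "g = munit (1,j) (2,k)" "j < r1" "k < r2"
      | (b) i j where "g = munit (0,i) (1,j)" "i < r0" "j < r1"
      | (c) i k where "g = munit (0,i) (2,k)" "i < r0" "k < r2"
      using Gen_cases[OF gG] by blast
    thus ?thesis
    proof cases
      case a
      have fg: "f g = shiftc k (colv x j)" unfolding f_def a(1) by (rule img12[OF xL a(2,3)])
      have "colv x j \<in> ms.span B1" using B1(3) a(2) by (auto simp: C_def)
      thus ?thesis unfolding fg using lin_span_into[OF shiftc_lin] sh a(3) by blast
    next
      case b
      have fg: "f g = - tens (eunit i) (rowv x j)" unfolding f_def b(1) img01[OF xL b(2,3)]
        by (simp add: shiftr_def tens_def eunit_def munit_app fun_eq_iff)
      have "eunit i \<in> ms.span B2" using B2(4) b(2) by (auto simp: E_def)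
      moreover have "rowv x j \<in> ms.span B3" using B3(3) b(3) by (auto simp: D_def)
      ultimately show ?thesis unfolding fg by (intro ms.span_neg key)
    next
      case c
      show ?thesis unfolding f_def c(1) img02[OF xL] by (rule ms.span_zero)
    qed
  qed
  have "f ` g3 r0 r1 r2 \<subseteq> ms.span G2"
    unfolding f_def img_span using imgs[unfolded f_def]
    by (intro ms.span_minimal) auto
  hence "ms.dim (f ` g3 r0 r1 r2) \<le> card G2" using ms.dim_le_card finG2 by blast
  also have "\<dots> \<le> card B1 * r2 + card F * card B3" by (rule cG2)
  also have "\<dots> \<le> (if r1 < r0 \<and> r1 < r2 then r1 * (r0 + r2 - r1) else r0 * r2)"
    by (rule arith_ub) (use cB1 cB1' cB2 cF cB3 cB3' in auto)
  finally show ?thesis unfolding f_def .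
qed


definition x0 :: "nat \<Rightarrow> nat \<Rightarrow> nat \<Rightarrow> (nat \<times> nat, 'k::field) pmat" where
  "x0 r0 r1 r2 = (\<lambda>p q. if (\<exists>i. p = (0,i) \<and> q = (1,i) \<and> i < min r0 r1) \<or> (\<exists>j. p = (1,j) \<and> q = (2,j) \<and> j < min r1 r2) then 1 else 0)"

lemma x0_inL: "inL r0 r1 r2 (x0 r0 r1 r2)"
  unfolding inL_def x0_def by (auto simp: mem_P3 prec3_def)

lemma x0_col: "i < min r0 r1 \<Longrightarrow> shiftc k (colv (x0 r0 r1 r2 :: (nat \<times> nat, 'k::field) pmat) i) = munit (0,i) (2,k)"
  by (auto simp: shiftc_def colv_def x0_def munit_app fun_eq_iff)

lemma x0_row: "j < min r1 r2 \<Longrightarrow> shiftr i (rowv (x0 r0 r1 r2 :: (nat \<times> nat, 'k::field) pmat) j) = munit (0,i) (2,j)"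
  by (auto simp: shiftr_def rowv_def x0_def munit_app fun_eq_iff)

lemma finite_Gen: "finite (Gen r0 r1 r2 :: (nat \<times> nat, 'k::field) pmat set)"
proof -
  have "(Gen r0 r1 r2 :: (nat \<times> nat, 'k::field) pmat set) \<subseteq> {munit p q | p q. p \<in> P3 r0 r1 r2 \<and> q \<in> P3 r0 r1 r2}"
    unfolding Gen_def by blast
  moreover have "finite {munit p q :: (nat \<times> nat, 'k::field) pmat | p q. p \<in> P3 r0 r1 r2 \<and> q \<in> P3 r0 r1 r2}"
    by (rule finite_image_set2) (use finite_P3 in auto)
  ultimately show ?thesis by (rule finite_subset)
qed

lemma lb:
  shows "(if r1 < r0 \<and> r1 < r2 then r1 * (r0 + r2 - r1) else r0 * r2)
     \<le> ms.dim ((\<lambda>y. commutator (P3 r0 r1 r2) (x0 r0 r1 r2) y) ` (g3 r0 r1 r2 :: (nat \<times> nat, 'k::field) pmat set))"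
proof -
  define a where "a = min r0 r1"
  define c where "c = min r1 r2"
  define x :: "(nat \<times> nat, 'k) pmat" where "x = x0 r0 r1 r2"
  define f where "f = (\<lambda>y. commutator (P3 r0 r1 r2) x y)"
  define Idx where "Idx = {..<a} \<times> {..<r2} \<union> {a..<r0} \<times> {..<c}"
  define Z where "Z = (\<lambda>(i,k). ((0::nat,i),(2::nat,k))) ` Idx"
  define S where "S = ((\<lambda>z. munit (fst z) (snd z)) ` Z :: (nat \<times> nat, 'k) pmat set)"
  have xL: "inL r0 r1 r2 x" unfolding x_def by (rule x0_inL)
  have finIdx: "finite Idx" unfolding Idx_def by auto
  have cIdx: "card Idx = a * r2 + (r0 - a) * c"
    unfolding Idx_def by (subst card_Un_disjoint) (auto simp: card_cartesian_product)
  have cZ: "card Z = card Idx" unfolding Z_def by (rule card_image) (auto simp: inj_on_def)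
  have cS: "card S = card Z" unfolding S_def by (rule card_image) (auto simp: inj_on_def munit_eq_iff)
  have finZ: "finite Z" unfolding Z_def using finIdx by simp
  have indS: "ms.independent S" unfolding S_def by (rule munit_indep[OF finZ])
  have ST: "S \<subseteq> ms.span (f ` Gen r0 r1 r2)"
  proof
    fix s assume "s \<in> S"
    then obtain i k where ik: "(i,k) \<in> Idx" "s = munit (0,i) (2,k)"
      by (auto simp: S_def Z_def)
    show "s \<in> ms.span (f ` Gen r0 r1 r2)"
    proof (cases "i < a")
      case True
      have "s = f (munit (1,i) (2,k))" unfolding f_def ik(2)
        using img12[OF xL, of i k] x0_col[of i r0 r1 k r2, where 'k='k] True ik(1)
        by (auto simp: a_def x_def Idx_def)
      moreover have "(munit (1,i) (2,k) :: (nat \<times> nat, 'k) pmat) \<in> Gen r0 r1 r2" using True ik(1)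
        unfolding Gen_def by (intro CollectI exI[of _ "(1,i)"] exI[of _ "(2,k)"]) (auto simp: a_def Idx_def mem_P3 prec3_def)
      ultimately show ?thesis by (intro ms.span_base) auto
    next
      case False
      hence ik2: "i < r0" "k < c" using ik(1) by (auto simp: Idx_def)
      have "s = - f (munit (0,i) (1,k))" unfolding f_def ik(2)
        using img01[OF xL, of i k] x0_row[of k r1 r2 i r0, where 'k='k] ik2
        by (auto simp: c_def x_def)
      moreover have "(munit (0,i) (1,k) :: (nat \<times> nat, 'k) pmat) \<in> Gen r0 r1 r2" using ik2
        unfolding Gen_def by (intro CollectI exI[of _ "(0,i)"] exI[of _ "(1,k)"]) (auto simp: c_def mem_P3 prec3_def)
      hence "f (munit (0,i) (1,k)) \<in> ms.span (f ` Gen r0 r1 r2)" by (intro ms.span_base imageI)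
      ultimately show ?thesis using ms.span_neg by metis
    qed
  qed
  have "S \<subseteq> f ` g3 r0 r1 r2" using ST unfolding f_def img_span .
  moreover have "f ` g3 r0 r1 r2 \<subseteq> ms.span (f ` Gen r0 r1 r2)" unfolding f_def img_span by simp
  ultimately have "card S \<le> ms.dim (f ` g3 r0 r1 r2)"
    using card_le_dim[OF _ indS, of "f ` g3 r0 r1 r2" "f ` Gen r0 r1 r2"] finite_Gen[of r0 r1 r2, where 'k='k] by auto
  moreover have "card S = (if r1 < r0 \<and> r1 < r2 then r1 * (r0 + r2 - r1) else r0 * r2)"
    using cS cZ cIdx arith_lb[of r0 r1 r2] by (simp add: a_def c_def)
  ultimately show ?thesis by (simp add: f_def x_def)
qed

theorem theorem6:
  fixes r0 r1 r2 :: nat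
  assumes "alg_closed TYPE('k::field_char_0)"
    and "r0 \<ge> 1" and "r1 \<ge> 1" and "r2 \<ge> 1"
  shows "breadth (P3 r0 r1 r2) (g3 r0 r1 r2 :: (nat \<times> nat, 'k) pmat set) =
           (if r1 < r0 \<and> r1 < r2 then r1 * (r0 + r2 - r1) else r0 * r2)"
proof -
  define bnd where "bnd = (if r1 < r0 \<and> r1 < r2 then r1 * (r0 + r2 - r1) else r0 * r2)"
  define A where "A = {ad_rank (P3 r0 r1 r2) (g3 r0 r1 r2 :: (nat \<times> nat, 'k) pmat set) x | x. x \<in> g3 r0 r1 r2}"
  have le: "y \<le> bnd" if yA: "y \<in> A" for y
  proof -
    obtain x where x: "x \<in> (g3 r0 r1 r2 :: (nat \<times> nat, 'k) pmat set)" "y = ad_rank (P3 r0 r1 r2) (g3 r0 r1 r2) x"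
      using yA unfolding A_def by blast
    have "inL r0 r1 r2 x" using x(1) by (simp add: g3_char)
    thus ?thesis using ub[of r0 r1 r2 x] x(2) by (simp add: ad_rank_def bnd_def)
  qed
  have x0L: "(x0 r0 r1 r2 :: (nat \<times> nat, 'k) pmat) \<in> g3 r0 r1 r2"
    by (simp add: g3_char x0_inL)
  have "ad_rank (P3 r0 r1 r2) (g3 r0 r1 r2 :: (nat \<times> nat, 'k) pmat set) (x0 r0 r1 r2) \<in> A"
    using x0L by (auto simp: A_def)
  moreover have "bnd \<le> ad_rank (P3 r0 r1 r2) (g3 r0 r1 r2 :: (nat \<times> nat, 'k) pmat set) (x0 r0 r1 r2)"
    using lb[of r1 r0 r2, where 'k='k] by (simp add: ad_rank_def bnd_def)
  ultimately have bA: "bnd \<in> A" using le by (metis antisym)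
  have finA: "finite A" using le by (meson finite_atMost finite_subset atMost_iff subsetI)
  have "Max A = bnd" using Max_eqI[OF finA le bA] .
  thus ?thesis by (simp add: breadth_def A_def bnd_def)
qed

end
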